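(* For every graph $G$ with $n$ vertices and $\mu$ maximal cliques, $$\frac{\mu}{2n}-1\le b_H(G)\le \mu-1.$$
   Context: A grid is the set of integer points of the plane; a grid edge joins two grid points at distance $1$. A path in the grid is a sequence of distinct grid edges in which consecutive edges share exactly one grid point and non-consecutive edges share none; a bend is a pair of consecutive edges of the path with different directions (horizontal/vertical). An EPG representation of a graph $G$ is a family $(P_v)_{v\in V(G)}$ of grid paths such that distinct $u,v$ are adjacent iff $P_u,P_v$ share a grid edge; it is a $B_k$-EPG representation if every path has at most $k$ bends. It is Helly if every subfamily of pairwise edge-intersecting paths has a grid edge common to all its members. The Helly-bend number $b_H(G)$ is the smallest $k$ such that $G$ admits a Helly $B_k$-EPG representation. *)

theory Defs
  imports Complex_Main
begin

type_synonym gpoint = "int \<times> int"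
type_synonym gedge = "gpoint set"

definition grid_edge :: "gedge \<Rightarrow> bool" where
  "grid_edge e \<longleftrightarrow> (\<exists>p q. e = {p, q} \<and> \<bar>fst p - fst q\<bar> + \<bar>snd p - snd q\<bar> = 1)"

definition horizontal :: "gedge \<Rightarrow> bool" where
  "horizontal e \<longleftrightarrow> (\<exists>p q. e = {p, q} \<and> p \<noteq> q \<and> snd p = snd q)"

definition grid_path :: "gedge list \<Rightarrow> bool" where
  "grid_path es \<longleftrightarrow> es \<noteq> [] \<and> distinct es \<and> (\<forall>e\<in>set es. grid_edge e) \<and>
     (\<forall>i j. i < j \<and> j < length es \<longrightarrow>
        (if j = Suc i then card (es ! i \<inter> es ! j) = 1 else es ! i \<inter> es ! j = {}))"

definition bends :: "gedge list \<Rightarrow> nat" where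
  "bends es = card {i. Suc i < length es \<and> horizontal (es ! i) \<noteq> horizontal (es ! Suc i)}"

definition epg_rep :: "'a set \<Rightarrow> ('a \<Rightarrow> 'a \<Rightarrow> bool) \<Rightarrow> ('a \<Rightarrow> gedge list) \<Rightarrow> bool" where
  "epg_rep V E P \<longleftrightarrow> (\<forall>v\<in>V. grid_path (P v)) \<and>
     (\<forall>u\<in>V. \<forall>v\<in>V. u \<noteq> v \<longrightarrow> (E u v \<longleftrightarrow> set (P u) \<inter> set (P v) \<noteq> {}))"

definition helly_rep :: "'a set \<Rightarrow> ('a \<Rightarrow> gedge list) \<Rightarrow> bool" where
  "helly_rep V P \<longleftrightarrow> (\<forall>S\<subseteq>V. (\<forall>u\<in>S. \<forall>v\<in>S. set (P u) \<inter> set (P v) \<noteq> {}) \<longrightarrow>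
      (\<exists>e. \<forall>v\<in>S. e \<in> set (P v)))"

definition helly_Bk_epg :: "nat \<Rightarrow> 'a set \<Rightarrow> ('a \<Rightarrow> 'a \<Rightarrow> bool) \<Rightarrow> ('a \<Rightarrow> gedge list) \<Rightarrow> bool" where
  "helly_Bk_epg k V E P \<longleftrightarrow> epg_rep V E P \<and> helly_rep V P \<and> (\<forall>v\<in>V. bends (P v) \<le> k)"

definition helly_bend :: "'a set \<Rightarrow> ('a \<Rightarrow> 'a \<Rightarrow> bool) \<Rightarrow> nat" where
  "helly_bend V E = (LEAST k. \<exists>P. helly_Bk_epg k V E P)"

definition clique :: "'a set \<Rightarrow> ('a \<Rightarrow> 'a \<Rightarrow> bool) \<Rightarrow> 'a set \<Rightarrow> bool" where
  "clique V E C \<longleftrightarrow> C \<subseteq> V \<and> (\<forall>u\<in>C. \<forall>v\<in>C. u \<noteq> v \<longrightarrow> E u v)"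

definition maximal_clique :: "'a set \<Rightarrow> ('a \<Rightarrow> 'a \<Rightarrow> bool) \<Rightarrow> 'a set \<Rightarrow> bool" where
  "maximal_clique V E C \<longleftrightarrow> clique V E C \<and> (\<forall>D. clique V E D \<and> C \<subseteq> D \<longrightarrow> D = C)"

end

theory Submission
  imports Defs
begin

definition walk :: "(nat \<Rightarrow> int \<times> int) \<Rightarrow> nat \<Rightarrow> gedge list" where
  "walk f L = map (\<lambda>i. {f i, f (Suc i)}) [0..<L]"

definition unit_steps :: "(nat \<Rightarrow> int \<times> int) \<Rightarrow> nat \<Rightarrow> bool" where
  "unit_steps f L \<longleftrightarrow> (\<forall>i<L. f (Suc i) = (fst (f i) + 1, snd (f i)) \<or> f (Suc i) = (fst (f i), snd (f i) + 1))"

lemma unit_stepsD: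
  "unit_steps f L \<Longrightarrow> i < L \<Longrightarrow> f (Suc i) = (fst (f i) + 1, snd (f i)) \<or> f (Suc i) = (fst (f i), snd (f i) + 1)"
  unfolding unit_steps_def by blast
lemma walk_sum:
  assumes "unit_steps f L" "i \<le> L"
  shows "fst (f i) + snd (f i) = fst (f 0) + snd (f 0) + int i"
  using assms(2)
proof (induction i)
  case 0 then show ?case by simp
next
  case (Suc i)
  then have iL: "i < L" by simp
  have h: "fst (f i) + snd (f i) = fst (f 0) + snd (f 0) + int i" using Suc.IH iL by simp
  from unit_stepsD[OF assms(1) iL] show ?case
  proof
    assume "f (Suc i) = (fst (f i) + 1, snd (f i))" then show ?case using h by simp
  next
    assume "f (Suc i) = (fst (f i), snd (f i) + 1)" then show ?case using h by simp
  qed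
qed

lemma walk_inj:
  assumes "unit_steps f L" "i \<le> L" "j \<le> L" "f i = f j"
  shows "i = j"
proof -
  have e: "fst (f i) + snd (f i) = fst (f j) + snd (f j)" using assms(4) by (rule arg_cong)
  have "int i = int j" using walk_sum[OF assms(1) assms(2)] walk_sum[OF assms(1) assms(3)] e by linarith
  then show ?thesis by simp
qed

lemma walk_set: "e \<in> set (walk f L) \<longleftrightarrow> (\<exists>i<L. e = {f i, f (Suc i)})"
  unfolding walk_def by auto

lemma walk_grid_path:
  assumes "unit_steps f L" "L > 0"
  shows "grid_path (walk f L)"
proof -
  have neq: "\<And>i j. i \<le> L \<Longrightarrow> j \<le> L \<Longrightarrow> i \<noteq> j \<Longrightarrow> f i \<noteq> f j"
    using walk_inj[OF assms(1)] by blast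
  have ne: "walk f L \<noteq> []" using assms(2) unfolding walk_def by simp
  have ge: "\<forall>e\<in>set (walk f L). grid_edge e"
  proof
    fix e assume "e \<in> set (walk f L)"
    then obtain i where i: "i < L" "e = {f i, f (Suc i)}" unfolding walk_set by blast
    have "\<bar>fst (f i) - fst (f (Suc i))\<bar> + \<bar>snd (f i) - snd (f (Suc i))\<bar> = 1"
      using unit_stepsD[OF assms(1) i(1)] by (elim disjE) simp_all
    then show "grid_edge e" unfolding grid_edge_def using i(2) by blast
  qed
  have nth: "\<And>i. i < L \<Longrightarrow> walk f L ! i = {f i, f (Suc i)}" unfolding walk_def by simp
  have dist: "distinct (walk f L)"
  proof -
    have "\<And>i j. i < L \<Longrightarrow> j < L \<Longrightarrow> {f i, f (Suc i)} = {f j, f (Suc j)} \<Longrightarrow> i = j"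
    proof (rule ccontr)
      fix i j assume ij: "i < L" "j < L" "{f i, f (Suc i)} = {f j, f (Suc j)}" "i \<noteq> j"
      have "f i \<in> {f j, f (Suc j)}" using ij(3) by (metis insertI1)
      then have "i = Suc j" using neq[of i j] neq[of i "Suc j"] ij by auto
      have "f j \<in> {f i, f (Suc i)}" using ij(3) by (metis insertI1)
      then have "j = Suc i" using neq[of j i] neq[of j "Suc i"] ij by auto
      then show False using \<open>i = Suc j\<close> by simp
    qed
    then show ?thesis unfolding walk_def distinct_map by (auto simp: inj_on_def)
  qed
  have inter: "\<forall>i j. i < j \<and> j < length (walk f L) \<longrightarrow>
        (if j = Suc i then card (walk f L ! i \<inter> walk f L ! j) = 1 else walk f L ! i \<inter> walk f L ! j = {})"
  proof (intro allI impI)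
    fix i j assume ij: "i < j \<and> j < length (walk f L)"
    then have jL: "j < L" "i < L" unfolding walk_def by auto
    show "if j = Suc i then card (walk f L ! i \<inter> walk f L ! j) = 1 else walk f L ! i \<inter> walk f L ! j = {}"
    proof (cases "j = Suc i")
      case True
      have n1: "f i \<noteq> f (Suc i)" "f i \<noteq> f (Suc (Suc i))" "f (Suc i) \<noteq> f (Suc (Suc i))"
        using neq jL True by auto
      have "walk f L ! i \<inter> walk f L ! j = {f i, f (Suc i)} \<inter> {f (Suc i), f (Suc (Suc i))}"
        using nth jL True by simp
      also have "\<dots> = {f (Suc i)}" using n1 by blast
      finally show ?thesis using True by simp
    next
      case False
      then have "Suc i < j" using ij by simp
      then have n1: "f i \<noteq> f j" "f i \<noteq> f (Suc j)" "f (Suc i) \<noteq> f j" "f (Suc i) \<noteq> f (Suc j)"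
        using neq jL by auto
      have "walk f L ! i \<inter> walk f L ! j = {f i, f (Suc i)} \<inter> {f j, f (Suc j)}"
        using nth jL by simp
      also have "\<dots> = {}" using n1 by blast
      finally show ?thesis using False by simp
    qed
  qed
  show ?thesis unfolding grid_path_def using ne dist ge inter by blast
qed

lemma horizontal_pair:
  assumes "a \<noteq> b" shows "horizontal {a, b} \<longleftrightarrow> snd a = snd b"
proof
  assume "horizontal {a, b}" then show "snd a = snd b" unfolding horizontal_def by (auto simp: doubleton_eq_iff)
next
  assume "snd a = snd b" then show "horizontal {a, b}" unfolding horizontal_def using assms by blast
qed

lemma walk_bends:
  assumes "unit_steps f L"
  shows "bends (walk f L) = card {i. Suc i < L \<and> (snd (f i) = snd (f (Suc i))) \<noteq> (snd (f (Suc i)) = snd (f (Suc (Suc i))))}"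
proof -
  have "\<And>i. i < L \<Longrightarrow> horizontal (walk f L ! i) \<longleftrightarrow> snd (f i) = snd (f (Suc i))"
  proof -
    fix i assume "i < L"
    then have "f i \<noteq> f (Suc i)" using walk_inj[OF assms, of i "Suc i"] by auto
    then show "horizontal (walk f L ! i) \<longleftrightarrow> snd (f i) = snd (f (Suc i))"
      using \<open>i < L\<close> by (simp add: walk_def horizontal_pair)
  qed
  then show ?thesis unfolding bends_def
    by (intro arg_cong[where f=card]) (auto simp: walk_def)
qed

definition dd :: "(nat \<Rightarrow> int) \<Rightarrow> nat \<Rightarrow> int" where
  "dd c k = c k + c (Suc k)"

definition seg :: "(nat \<Rightarrow> int) \<Rightarrow> int \<Rightarrow> nat" where
  "seg c s = (LEAST j. s < dd c j)"

definition pos :: "(nat \<Rightarrow> int) \<Rightarrow> int \<Rightarrow> int \<times> int" where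
  "pos c s = (if odd (seg c s) then (s - c (seg c s), c (seg c s)) else (c (seg c s), s - c (seg c s)))"

definition stair :: "(nat \<Rightarrow> int) \<Rightarrow> nat \<Rightarrow> gedge list" where
  "stair c m = walk (\<lambda>i. pos c (dd c 0 + int i)) (nat (dd c m - dd c 0))"

lemma dd_mono:
  assumes "strict_mono c" shows "strict_mono (dd c)"
  using assms unfolding strict_mono_def dd_def by (simp add: add_strict_mono)

lemma smono_int_ge:
  fixes g :: "nat \<Rightarrow> int"
  assumes "strict_mono g" shows "g k \<ge> g 0 + int k"
proof (induction k)
  case 0 then show ?case by simp
next
  case (Suc k)
  have "g k < g (Suc k)" using assms by (simp add: strict_mono_def)
  then show ?case using Suc by simp
qed

lemma seg_eq:
  assumes "strict_mono c" "1 \<le> j" "dd c (j - 1) \<le> s" "s < dd c j"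
  shows "seg c s = j"
  unfolding seg_def
proof (rule Least_equality)
  show "s < dd c j" by fact
next
  fix y assume "s < dd c y"
  show "j \<le> y"
  proof (rule ccontr)
    assume "\<not> j \<le> y"
    then have "y \<le> j - 1" by simp
    then have "dd c y \<le> dd c (j - 1)" using dd_mono[OF assms(1)] by (simp add: strict_mono_less_eq)
    then show False using \<open>s < dd c y\<close> assms(3) by simp
  qed
qed

lemma seg_props:
  assumes "strict_mono c" "dd c 0 \<le> s"
  shows "1 \<le> seg c s \<and> dd c (seg c s - 1) \<le> s \<and> s < dd c (seg c s)"
proof -
  define j where "j = Suc (nat (s - dd c 0))"
  have "dd c j \<ge> dd c 0 + int j" using smono_int_ge[OF dd_mono[OF assms(1)]] by blast
  then have ex: "s < dd c j" unfolding j_def using assms(2) by simp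
  have a: "s < dd c (seg c s)" unfolding seg_def using LeastI[of "\<lambda>j. s < dd c j", OF ex] .
  have "seg c s \<noteq> 0" using a assms(2) by (metis leD)
  moreover have "\<not> s < dd c (seg c s - 1)"
    unfolding seg_def by (rule not_less_Least) (use \<open>seg c s \<noteq> 0\<close> in \<open>simp add: seg_def\<close>)
  ultimately show ?thesis using a by simp
qed

lemma seg_le:
  assumes "s < dd c j" shows "seg c s \<le> j"
  unfolding seg_def using assms by (rule Least_le)

lemma seg_mono:
  assumes "strict_mono c" "dd c 0 \<le> s" "s \<le> s'"
  shows "seg c s \<le> seg c s'"
proof -
  have "s' < dd c (seg c s')" using seg_props[OF assms(1)] assms by fastforce
  then show ?thesis using assms(3) by (intro seg_le) simp
qed

lemma pos_step:
  assumes "strict_mono c" "dd c 0 \<le> s"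
  shows "pos c (s + 1) = (if odd (seg c s) then (fst (pos c s) + 1, snd (pos c s)) else (fst (pos c s), snd (pos c s) + 1))"
proof -
  define j where "j = seg c s"
  have p: "1 \<le> j" "dd c (j - 1) \<le> s" "s < dd c j" using seg_props[OF assms] unfolding j_def by auto
  show ?thesis
  proof (cases "s + 1 < dd c j")
    case True
    then have "seg c (s + 1) = j" using p by (intro seg_eq[OF assms(1)]) auto
    then show ?thesis unfolding pos_def j_def[symmetric] by auto
  next
    case False
    then have e: "s + 1 = dd c j" using p by simp
    have "dd c j < dd c (Suc j)" using dd_mono[OF assms(1)] by (simp add: strict_mono_def)
    then have "seg c (s + 1) = Suc j" using e by (intro seg_eq[OF assms(1)]) auto
    then show ?thesis unfolding pos_def j_def[symmetric] using e by (auto simp: dd_def)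
  qed
qed

lemma stair_unit:
  assumes "strict_mono c"
  shows "unit_steps (\<lambda>i. pos c (dd c 0 + int i)) L"
  unfolding unit_steps_def
proof (intro allI impI)
  fix i assume "i < L"
  have "pos c (dd c 0 + int (Suc i)) = pos c ((dd c 0 + int i) + 1)" by (simp add: algebra_simps)
  then show "pos c (dd c 0 + int (Suc i)) = (fst (pos c (dd c 0 + int i)) + 1, snd (pos c (dd c 0 + int i))) \<or>
         pos c (dd c 0 + int (Suc i)) = (fst (pos c (dd c 0 + int i)), snd (pos c (dd c 0 + int i)) + 1)"
    using pos_step[OF assms, of "dd c 0 + int i"] by (auto split: if_splits)
qed

lemma stair_grid_path:
  assumes "strict_mono c" "m \<ge> 1"
  shows "grid_path (stair c m)"
proof -
  have "dd c 0 < dd c m" using dd_mono[OF assms(1)] assms(2) by (simp add: strict_mono_def)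
  then show ?thesis unfolding stair_def by (intro walk_grid_path stair_unit assms(1)) simp
qed

lemma stair_bends:
  assumes "strict_mono c" "m \<ge> 1"
  shows "bends (stair c m) \<le> m - 1"
proof -
  define f where "f = (\<lambda>i. pos c (dd c 0 + int i))"
  define L where "L = nat (dd c m - dd c 0)"
  define Bs where "Bs = {i. Suc i < L \<and> (snd (f i) = snd (f (Suc i))) \<noteq> (snd (f (Suc i)) = snd (f (Suc (Suc i))))}"
  have b: "bends (stair c m) = card Bs" unfolding stair_def Bs_def f_def L_def
    by (rule walk_bends[OF stair_unit[OF assms(1)]])
  have hz: "\<And>i. (snd (f i) = snd (f (Suc i))) \<longleftrightarrow> odd (seg c (dd c 0 + int i))"
  proof -
    fix i
    have "f (Suc i) = pos c ((dd c 0 + int i) + 1)" unfolding f_def by (simp add: algebra_simps)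
    then show "(snd (f i) = snd (f (Suc i))) \<longleftrightarrow> odd (seg c (dd c 0 + int i))"
      using pos_step[OF assms(1), of "dd c 0 + int i"] unfolding f_def by auto
  qed
  define g where "g = (\<lambda>i. seg c (dd c 0 + int i))"
  have "inj_on g Bs \<and> g ` Bs \<subseteq> {1..<m}"
  proof -
    have key: "\<And>i. i \<in> Bs \<Longrightarrow> 1 \<le> g i \<and> g i < g (Suc i) \<and> g (Suc i) \<le> m"
    proof -
      fix i assume "i \<in> Bs"
      then have i: "Suc i < L" "odd (g i) \<noteq> odd (g (Suc i))" unfolding Bs_def g_def using hz by auto
      have "g i \<le> g (Suc i)" unfolding g_def by (intro seg_mono[OF assms(1)]) auto
      moreover have "g i \<noteq> g (Suc i)" using i(2) by auto
      moreover have "g (Suc i) \<le> m" unfolding g_def using i(1) unfolding L_def by (intro seg_le) auto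
      moreover have "1 \<le> g i" unfolding g_def using seg_props[OF assms(1)] by auto
      ultimately show "1 \<le> g i \<and> g i < g (Suc i) \<and> g (Suc i) \<le> m" by simp
    qed
    have "inj_on g Bs"
    proof (rule inj_onI)
      fix x y assume xy: "x \<in> Bs" "y \<in> Bs" "g x = g y"
      show "x = y"
      proof (rule ccontr)
        assume "x \<noteq> y"
        then consider "x < y" | "y < x" by linarith
        then show False
        proof cases
          case 1
          then have "g (Suc x) \<le> g y" unfolding g_def by (intro seg_mono[OF assms(1)]) auto
          then show False using key[OF xy(1)] xy(3) by simp
        next
          case 2
          then have "g (Suc y) \<le> g x" unfolding g_def by (intro seg_mono[OF assms(1)]) auto
          then show False using key[OF xy(2)] xy(3) by simp
        qed
      qed
    qed
    moreover have "g ` Bs \<subseteq> {1..<m}" using key by fastforce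
    ultimately show ?thesis by simp
  qed
  then have "card Bs \<le> card {1..<m}" by (intro card_inj_on_le) auto
  then show ?thesis using b by simp
qed

lemma stair_edges:
  assumes "strict_mono c" "e \<in> set (stair c m)"
  shows "\<exists>j s. 1 \<le> j \<and> j \<le> m \<and> ((odd j \<and> e = {(s, c j), (s + 1, c j)}) \<or> (even j \<and> e = {(c j, s), (c j, s + 1)}))"
proof -
  obtain i where i: "i < nat (dd c m - dd c 0)" "e = {pos c (dd c 0 + int i), pos c (dd c 0 + int (Suc i))}"
    using assms(2) unfolding stair_def walk_set by blast
  define s where "s = dd c 0 + int i"
  have e: "e = {pos c s, pos c (s + 1)}" using i(2) unfolding s_def by (simp add: algebra_simps)
  have "s < dd c m" using i(1) unfolding s_def by simp
  then have jm: "seg c s \<le> m" by (rule seg_le)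
  have j1: "1 \<le> seg c s" using seg_props[OF assms(1), of s] unfolding s_def by simp
  have s0: "dd c 0 \<le> s" unfolding s_def by simp
  have e2: "e = (if odd (seg c s) then {(s - c (seg c s), c (seg c s)), (s - c (seg c s) + 1, c (seg c s))}
     else {(c (seg c s), s - c (seg c s)), (c (seg c s), s - c (seg c s) + 1)})"
    unfolding e pos_step[OF assms(1) s0] by (simp add: pos_def)
  show ?thesis
  proof (cases "odd (seg c s)")
    case True
    then show ?thesis using e2 jm j1
      by (intro exI[of _ "seg c s"] exI[of _ "s - c (seg c s)"]) simp
  next
    case False
    then show ?thesis using e2 jm j1
      by (intro exI[of _ "seg c s"] exI[of _ "s - c (seg c s)"]) simp
  qed
qed

lemma stair_has:
  assumes "strict_mono c" "1 \<le> j" "j \<le> m" "c (j - 1) \<le> x" "x < c (Suc j)"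
  shows "odd j \<Longrightarrow> {(x, c j), (x + 1, c j)} \<in> set (stair c m)"
    and "even j \<Longrightarrow> {(c j, x), (c j, x + 1)} \<in> set (stair c m)"
proof -
  define s where "s = x + c j"
  have djm: "dd c (j - 1) = c (j - 1) + c j" unfolding dd_def using assms(2) by (cases j) auto
  have sj: "seg c s = j" using assms djm unfolding s_def by (intro seg_eq) (auto simp: dd_def)
  have le0: "dd c 0 \<le> dd c (j - 1)" using dd_mono[OF assms(1)] by (simp add: strict_mono_less_eq)
  have lem: "dd c j \<le> dd c m" using dd_mono[OF assms(1)] assms(3) by (simp add: strict_mono_less_eq)
  have s0: "dd c 0 \<le> s" using le0 assms(4) unfolding s_def dd_def using assms(2) by simp
  have sm: "s < dd c m" using lem assms(5) unfolding s_def dd_def by simp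
  define i where "i = nat (s - dd c 0)"
  have i: "i < nat (dd c m - dd c 0)" "dd c 0 + int i = s" using s0 sm unfolding i_def by auto
  have mem: "{pos c s, pos c (s + 1)} \<in> set (stair c m)"
    unfolding stair_def walk_set using i by (intro exI[of _ i]) (simp add: algebra_simps)
  show "odd j \<Longrightarrow> {(x, c j), (x + 1, c j)} \<in> set (stair c m)"
    using mem pos_step[OF assms(1) s0] sj by (simp add: pos_def s_def)
  show "even j \<Longrightarrow> {(c j, x), (c j, x + 1)} \<in> set (stair c m)"
    using mem pos_step[OF assms(1) s0] sj by (simp add: pos_def s_def add.commute)
qed

lemma clique_extend:
  assumes "finite V" "clique V E C"
  shows "\<exists>D. maximal_clique V E D \<and> C \<subseteq> D"
proof -
  have "\<exists>D. (clique V E D \<and> C \<subseteq> D) \<and> (\<forall>y. (clique V E y \<and> C \<subseteq> y) \<longrightarrow> card y \<le> card D)"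
  proof (rule ex_has_greatest_nat[where b = "Suc (card V)"])
    show "clique V E C \<and> C \<subseteq> C" using assms(2) by simp
    show "\<forall>y. clique V E y \<and> C \<subseteq> y \<longrightarrow> card y < Suc (card V)"
      using assms(1) by (auto simp: clique_def intro: card_mono le_imp_less_Suc)
  qed
  then obtain D where D: "clique V E D" "C \<subseteq> D" "\<And>y. clique V E y \<Longrightarrow> C \<subseteq> y \<Longrightarrow> card y \<le> card D"
    by blast
  have "maximal_clique V E D"
    unfolding maximal_clique_def
  proof (intro conjI allI impI)
    show "clique V E D" by fact
    fix D' assume "clique V E D' \<and> D \<subseteq> D'"
    then have "D \<subseteq> D'" "card D' \<le> card D" "finite D'" using D assms(1)
      by (auto simp: clique_def intro: finite_subset)
    then show "D' = D" using card_mono[of D' D] card_subset_eq[of D' D] by simp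
  qed
  then show ?thesis using D by blast
qed

lemma div_unique_aux:
  fixes B o1 o2 :: int
  assumes "B * int j + o1 = B * int j' + o2" "0 \<le> o1" "o1 < B" "0 \<le> o2" "o2 < B"
  shows "j = j' \<and> o1 = o2"
proof -
  have "\<not> j < j'" if "B * int j + o1 = B * int j' + o2" "0 \<le> o1" "o1 < B" "0 \<le> o2" "o2 < B" for j j' o1 o2
  proof
    assume "j < j'"
    then have "int j + 1 \<le> int j'" by simp
    then have "B * (int j + 1) \<le> B * int j'" using that by (intro mult_left_mono) auto
    then show False using that by (simp add: algebra_simps)
  qed
  from this[OF assms] this[of j' o2 j o1] assms have "j = j'" by force
  then show ?thesis using assms by simp
qed

lemma edge_line_eq:
  fixes s a s' a' :: int
  assumes "(P \<and> e = {(s, a), (s + 1, a)}) \<or> (Q \<and> e = {(a, s), (a, s + 1)})"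
    and "(P' \<and> e = {(s', a'), (s' + 1, a')}) \<or> (Q' \<and> e = {(a', s'), (a', s' + 1)})"
  shows "a = a' \<and> ((P \<and> e = {(s, a), (s + 1, a)}) \<longleftrightarrow> (P' \<and> e = {(s', a'), (s' + 1, a')}))"
proof -
  have m1: "(s, a) \<in> {(s, a), (s + 1, a)}" "(s + 1, a) \<in> {(s, a), (s + 1, a)}" by auto
  have m2: "(a, s) \<in> {(a, s), (a, s + 1)}" "(a, s + 1) \<in> {(a, s), (a, s + 1)}" by auto
  have hv: "{(x, y), (x + 1, y)} \<noteq> {(z, w), (z, w + 1)}" for x y z w :: int
  proof
    assume h: "{(x, y), (x + 1, y)} = {(z, w), (z, w + 1)}"
    have "(x, y) \<in> {(z, w), (z, w + 1)}" "(x + 1, y) \<in> {(z, w), (z, w + 1)}" using h[symmetric] by auto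
    then show False by auto
  qed
  have hh: "{(x, y), (x + 1, y)} = {(z, w), (z + 1, w)} \<Longrightarrow> y = w" for x y z w :: int
  proof -
    assume h: "{(x, y), (x + 1, y)} = {(z, w), (z + 1, w)}"
    have "(x, y) \<in> {(z, w), (z + 1, w)}" using h[symmetric] by auto
    then show "y = w" by auto
  qed
  have vv: "{(y, x), (y, x + 1)} = {(w, z), (w, z + 1)} \<Longrightarrow> y = w" for x y z w :: int
  proof -
    assume h: "{(y, x), (y, x + 1)} = {(w, z), (w, z + 1)}"
    have "(y, x) \<in> {(w, z), (w, z + 1)}" using h[symmetric] by auto
    then show "y = w" by auto
  qed
  show ?thesis using assms hv hh vv by metis
qed

lemma upper_construction:
  fixes V :: "'a set" and E :: "'a \<Rightarrow> 'a \<Rightarrow> bool"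
  assumes fin: "finite V" and sym: "\<And>u v. E u v \<Longrightarrow> E v u"
  shows "card {C. maximal_clique V E C} \<ge> 1 \<and> (\<exists>P. helly_Bk_epg (card {C. maximal_clique V E C} - 1) V E P)"
proof -
  define Cl where "Cl = {C. maximal_clique V E C}"
  define m where "m = card Cl"
  define n where "n = card V"
  have mcV: "\<And>C. maximal_clique V E C \<Longrightarrow> C \<subseteq> V" unfolding maximal_clique_def clique_def by blast
  have "Cl \<subseteq> Pow V" unfolding Cl_def using mcV by blast
  then have finCl: "finite Cl" using fin by (meson finite_Pow_iff finite_subset)
  have "clique V E {}" by (simp add: clique_def)
  then obtain D0 where "maximal_clique V E D0" using clique_extend[OF fin] by blast
  then have "Cl \<noteq> {}" unfolding Cl_def by blast
  then have m1: "m \<ge> 1" unfolding m_def using finCl by (simp add: Suc_le_eq card_gt_0_iff)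
  obtain h where h: "bij_betw h {0..<m} Cl" using ex_bij_betw_nat_finite[OF finCl] unfolding m_def by blast
  obtain idv where idv: "bij_betw idv V {0..<n}" using ex_bij_betw_finite_nat[OF fin] unfolding n_def by blast
  define cl where "cl j = h (j - 1)" for j
  have cl_in: "\<And>j. 1 \<le> j \<Longrightarrow> j \<le> m \<Longrightarrow> maximal_clique V E (cl j)"
    using h unfolding cl_def bij_betw_def Cl_def by auto
  have cl_all: "\<And>C. maximal_clique V E C \<Longrightarrow> \<exists>j. 1 \<le> j \<and> j \<le> m \<and> C = cl j"
  proof -
    fix C assume "maximal_clique V E C"
    then have "C \<in> h ` {0..<m}" using h unfolding bij_betw_def Cl_def by auto
    then obtain i where "i < m" "C = h i" by auto
    then show "\<exists>j. 1 \<le> j \<and> j \<le> m \<and> C = cl j" unfolding cl_def by (intro exI[of _ "Suc i"]) auto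
  qed
  have cl_clique: "\<And>j u v. 1 \<le> j \<Longrightarrow> j \<le> m \<Longrightarrow> u \<in> cl j \<Longrightarrow> v \<in> cl j \<Longrightarrow> u \<noteq> v \<Longrightarrow> E u v"
    using cl_in unfolding maximal_clique_def clique_def by blast
  have cl_sub: "\<And>j. 1 \<le> j \<Longrightarrow> j \<le> m \<Longrightarrow> cl j \<subseteq> V"
    using cl_in unfolding maximal_clique_def clique_def by blast
  have idv_lt: "\<And>v. v \<in> V \<Longrightarrow> idv v < n" using idv unfolding bij_betw_def by auto
  have idv_inj: "inj_on idv V" using idv unfolding bij_betw_def by auto
  define B :: int where "B = int n + 2"
  define oo where "oo v j = (if 1 \<le> j \<and> j \<le> m \<and> v \<notin> cl j then int (idv v) + 1 else 0)" for v j
  define c where "c v j = B * int j + oo v j" for v j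
  define P where "P v = stair (c v) m" for v
  have oo_bd: "\<And>v j. v \<in> V \<Longrightarrow> 0 \<le> oo v j \<and> oo v j \<le> int n"
    using idv_lt unfolding oo_def by fastforce
  have smono: "\<And>v. v \<in> V \<Longrightarrow> strict_mono (c v)"
  proof -
    fix v assume v: "v \<in> V"
    show "strict_mono (c v)" unfolding strict_mono_Suc_iff
    proof
      fix j
      have "oo v j \<le> int n" "0 \<le> oo v (Suc j)" using oo_bd[OF v] by auto
      then show "c v j < c v (Suc j)" unfolding c_def B_def by (simp add: algebra_simps)
    qed
  qed
  define ce where "ce j = (if odd j then {(B * int j, B * int j), (B * int j + 1, B * int j)}
      else {(B * int j, B * int j), (B * int j, B * int j + 1)})" for j
  have ce_in: "\<And>j v. 1 \<le> j \<Longrightarrow> j \<le> m \<Longrightarrow> v \<in> cl j \<Longrightarrow> ce j \<in> set (P v)"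
  proof -
    fix j v assume j: "1 \<le> j" "j \<le> m" and v: "v \<in> cl j"
    have vV: "v \<in> V" using cl_sub[OF j] v by blast
    have cj: "c v j = B * int j" unfolding c_def oo_def using v by simp
    have "c v (j - 1) = B * (int j - 1) + oo v (j - 1)" unfolding c_def using j by (simp add: of_nat_diff)
    then have a: "c v (j - 1) \<le> B * int j" using oo_bd[OF vV, of "j - 1"] unfolding B_def by (simp add: algebra_simps)
    have b: "B * int j < c v (Suc j)" using oo_bd[OF vV, of "Suc j"] unfolding c_def B_def by (simp add: algebra_simps)
    show "ce j \<in> set (P v)"
      using stair_has[OF smono[OF vV] j a b] cj unfolding P_def ce_def by auto
  qed
  have shared: "\<And>u v e. u \<in> V \<Longrightarrow> v \<in> V \<Longrightarrow> e \<in> set (P u) \<Longrightarrow> e \<in> set (P v) \<Longrightarrow>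
      u = v \<or> (\<exists>j. 1 \<le> j \<and> j \<le> m \<and> u \<in> cl j \<and> v \<in> cl j)"
  proof -
    fix u v e assume uv: "u \<in> V" "v \<in> V" "e \<in> set (P u)" "e \<in> set (P v)"
    obtain j s where js: "1 \<le> j" "j \<le> m" "(odd j \<and> e = {(s, c u j), (s + 1, c u j)}) \<or> (even j \<and> e = {(c u j, s), (c u j, s + 1)})"
      using stair_edges[OF smono[OF uv(1)] uv(3)[unfolded P_def]] by blast
    obtain j' s' where js': "1 \<le> j'" "j' \<le> m" "(odd j' \<and> e = {(s', c v j'), (s' + 1, c v j')}) \<or> (even j' \<and> e = {(c v j', s'), (c v j', s' + 1)})"
      using stair_edges[OF smono[OF uv(2)] uv(4)[unfolded P_def]] by blast
    have ceq: "c u j = c v j'" using edge_line_eq[OF js(3) js'(3)] by blast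
    then have "B * int j + oo u j = B * int j' + oo v j'" unfolding c_def .
    then have jj: "j = j' \<and> oo u j = oo v j'"
      using oo_bd[OF uv(1), of j] oo_bd[OF uv(2), of j'] unfolding B_def
      by (intro div_unique_aux) auto
    show "u = v \<or> (\<exists>j. 1 \<le> j \<and> j \<le> m \<and> u \<in> cl j \<and> v \<in> cl j)"
    proof (cases "u \<in> cl j \<and> v \<in> cl j")
      case True then show ?thesis using js by blast
    next
      case False
      then have "oo u j \<noteq> 0 \<or> oo v j \<noteq> 0" unfolding oo_def using js by auto
      then have "oo u j \<noteq> 0 \<and> oo v j \<noteq> 0" using jj by auto
      then have "idv u = idv v" using jj unfolding oo_def by (auto split: if_splits)
      then show ?thesis using idv_inj uv by (auto dest: inj_onD)
    qed
  qed
  have gp: "\<forall>v\<in>V. grid_path (P v)" unfolding P_def using stair_grid_path smono m1 by blast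
  have adj: "\<And>u v. u \<in> V \<Longrightarrow> v \<in> V \<Longrightarrow> u \<noteq> v \<Longrightarrow> E u v \<longleftrightarrow> set (P u) \<inter> set (P v) \<noteq> {}"
  proof -
    fix u v assume uv: "u \<in> V" "v \<in> V" "u \<noteq> v"
    show "E u v \<longleftrightarrow> set (P u) \<inter> set (P v) \<noteq> {}"
    proof
      assume "E u v"
      then have "clique V E {u, v}" using uv sym unfolding clique_def by auto
      then obtain D where "maximal_clique V E D" "{u, v} \<subseteq> D" using clique_extend[OF fin] by blast
      then obtain j where "1 \<le> j" "j \<le> m" "u \<in> cl j" "v \<in> cl j" using cl_all by blast
      then have "ce j \<in> set (P u) \<inter> set (P v)" using ce_in by blast
      then show "set (P u) \<inter> set (P v) \<noteq> {}" by blast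
    next
      assume "set (P u) \<inter> set (P v) \<noteq> {}"
      then obtain e where "e \<in> set (P u)" "e \<in> set (P v)" by blast
      then show "E u v" using shared[OF uv(1,2)] cl_clique uv(3) by blast
    qed
  qed
  have helly: "helly_rep V P"
    unfolding helly_rep_def
  proof (intro allI impI)
    fix S assume S: "S \<subseteq> V" "\<forall>u\<in>S. \<forall>v\<in>S. set (P u) \<inter> set (P v) \<noteq> {}"
    have "clique V E S" unfolding clique_def using S adj by blast
    then obtain D where "maximal_clique V E D" "S \<subseteq> D" using clique_extend[OF fin] by blast
    then obtain j where "1 \<le> j" "j \<le> m" "S \<subseteq> cl j" using cl_all by blast
    then show "\<exists>e. \<forall>v\<in>S. e \<in> set (P v)" using ce_in by blast
  qed
  have bd: "\<forall>v\<in>V. bends (P v) \<le> m - 1" unfolding P_def using stair_bends smono m1 by blast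
  have "helly_Bk_epg (m - 1) V E P"
    unfolding helly_Bk_epg_def epg_rep_def using gp adj helly bd by blast
  then show ?thesis using m1 unfolding m_def Cl_def by blast
qed

definition BS :: "gedge list \<Rightarrow> nat set" where
  "BS es = {i. Suc i < length es \<and> horizontal (es ! i) \<noteq> horizontal (es ! Suc i)}"

definition EndIdx :: "gedge list \<Rightarrow> nat set" where
  "EndIdx es = {0, length es - 1} \<union> BS es \<union> Suc ` BS es"

lemma EndIdx_finite: "finite (EndIdx es)"
proof -
  have "finite (BS es)" unfolding BS_def by (rule finite_subset[of _ "{..<length es}"]) auto
  then show ?thesis unfolding EndIdx_def by simp
qed

lemma EndIdx_card: "card (EndIdx es) \<le> 2 + 2 * bends es"
proof -
  have f: "finite (BS es)" unfolding BS_def by (rule finite_subset[of _ "{..<length es}"]) auto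
  have "card (EndIdx es) \<le> card ({0, length es - 1} \<union> BS es) + card (Suc ` BS es)"
    unfolding EndIdx_def by (rule card_Un_le)
  also have "\<dots> \<le> card {0, length es - 1} + card (BS es) + card (BS es)"
    using card_Un_le[of "{0, length es - 1}" "BS es"] card_image_le[OF f, of Suc] by linarith
  also have "card {0, length es - 1} \<le> 2" by (rule order_trans[OF card_insert_le_m1]) auto
  then have "card {0, length es - 1} + card (BS es) + card (BS es) \<le> 2 + 2 * bends es"
    unfolding bends_def BS_def by simp
  finally show ?thesis .
qed

lemma grid_edge_norm:
  assumes "grid_edge e"
  shows "\<exists>x0 y0 dx dy. ((dx = 1 \<and> dy = 0) \<or> (dx = 0 \<and> dy = (1::int))) \<and> e = {(x0, y0), (x0 + dx, y0 + dy)}"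
proof -
  obtain p q where pq: "e = {p, q}" "\<bar>fst p - fst q\<bar> + \<bar>snd p - snd q\<bar> = 1"
    using assms unfolding grid_edge_def by blast
  obtain a b where p: "p = (a, b)" by fastforce
  obtain c d where q: "q = (c, d)" by fastforce
  have e: "e = {(a, b), (c, d)}" "\<bar>a - c\<bar> + \<bar>b - d\<bar> = 1" using pq p q by auto
  have "(c = a + 1 \<and> d = b) \<or> (a = c + 1 \<and> d = b) \<or> (c = a \<and> d = b + 1) \<or> (c = a \<and> b = d + 1)"
    using e(2) by arith
  then consider "c = a + 1 \<and> d = b" | "a = c + 1 \<and> d = b" | "c = a \<and> d = b + 1" | "c = a \<and> b = d + 1"
    by blast
  then show ?thesis
  proof cases
    case 1 then show ?thesis using e(1) by (intro exI[of _ a] exI[of _ b] exI[of _ 1] exI[of _ 0]) simp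
  next
    case 2 then show ?thesis using e(1) by (intro exI[of _ c] exI[of _ d] exI[of _ 1] exI[of _ 0]) (simp add: insert_commute)
  next
    case 3 then show ?thesis using e(1) by (intro exI[of _ a] exI[of _ b] exI[of _ 0] exI[of _ 1]) simp
  next
    case 4 then show ?thesis using e(1) by (intro exI[of _ c] exI[of _ d] exI[of _ 0] exI[of _ 1]) (simp add: insert_commute)
  qed
qed

lemma line_nb:
  assumes "grid_edge f" "(a, b) \<in> f" "f \<noteq> {(a, b), (a + dx, b + dy)}"
    "(dx = 1 \<and> dy = 0) \<or> (dx = 0 \<and> dy = (1::int))"
    "horizontal f = (dy = 0)"
  shows "f = {(a - dx, b - dy), (a, b)}"
proof -
  obtain p q where pq: "f = {p, q}" "\<bar>fst p - fst q\<bar> + \<bar>snd p - snd q\<bar> = 1"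
    using assms(1) unfolding grid_edge_def by blast
  obtain r where r: "f = {(a, b), r}" "\<bar>fst r - a\<bar> + \<bar>snd r - b\<bar> = 1"
  proof (cases "p = (a, b)")
    case True then show ?thesis using that pq by (auto simp: abs_minus_commute)
  next
    case False then have "q = (a, b)" using pq assms(2) by auto
    then show ?thesis using that pq by (auto simp: insert_commute)
  qed
  have rne: "r \<noteq> (a, b)" using r(2) by auto
  have hz: "horizontal f \<longleftrightarrow> snd r = b" using horizontal_pair[OF rne[symmetric]] r(1) by auto
  obtain r1 r2 where rr: "r = (r1, r2)" by fastforce
  have "r \<noteq> (a + dx, b + dy)" using assms(3) r(1) by auto
  then have "r = (a - dx, b - dy)" using assms(4) assms(5) hz r(2) rr by auto
  then show ?thesis using r(1) by (simp add: insert_commute)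
qed

lemma ends_lemma:
  assumes gp: "grid_path es" and i: "i < length es"
    and d: "(dx = 1 \<and> dy = 0) \<or> (dx = 0 \<and> dy = (1::int))"
    and ei: "es ! i = {(a, b), (a + dx, b + dy)}"
    and nin: "{(a - dx, b - dy), (a, b)} \<notin> set es"
  shows "i \<in> EndIdx es"
proof (rule ccontr)
  assume nI: "i \<notin> EndIdx es"
  then have i0: "0 < i" and il: "Suc i < length es" using i unfolding EndIdx_def by auto
  obtain i' where i': "i = Suc i'" using i0 gr0_implies_Suc by blast
  have b1: "horizontal (es ! i') = horizontal (es ! i)" using nI i' il unfolding EndIdx_def BS_def by auto
  have b2: "horizontal (es ! Suc i) = horizontal (es ! i)" using nI il unfolding EndIdx_def BS_def by auto
  have gpd: "distinct es" "\<forall>e\<in>set es. grid_edge e"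
    "\<forall>i j. i < j \<and> j < length es \<longrightarrow> (if j = Suc i then card (es ! i \<inter> es ! j) = 1 else es ! i \<inter> es ! j = {})"
    using gp unfolding grid_path_def by auto
  have c1: "card (es ! i' \<inter> es ! i) = 1" using gpd(3) i' il by auto
  have c2: "card (es ! i \<inter> es ! Suc i) = 1" using gpd(3) il by auto
  have dj: "es ! i' \<inter> es ! Suc i = {}" using gpd(3)[rule_format, of i' "Suc i"] i' il by auto
  have ab: "(a, b) \<in> es ! i' \<or> (a, b) \<in> es ! Suc i"
  proof (rule ccontr)
    assume "\<not> ?thesis"
    then have "es ! i' \<inter> es ! i \<subseteq> {(a + dx, b + dy)}" "es ! i \<inter> es ! Suc i \<subseteq> {(a + dx, b + dy)}"
      using ei by auto
    moreover have "es ! i' \<inter> es ! i \<noteq> {}" "es ! i \<inter> es ! Suc i \<noteq> {}" using c1 c2 by auto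
    ultimately have "(a + dx, b + dy) \<in> es ! i'" "(a + dx, b + dy) \<in> es ! Suc i" by auto
    then show False using dj by auto
  qed
  have hor: "horizontal (es ! i) = (dy = 0)"
    using ei horizontal_pair[of "(a, b)" "(a + dx, b + dy)"] d by auto
  obtain j where j: "j < length es" "j \<noteq> i" "(a, b) \<in> es ! j" "horizontal (es ! j) = horizontal (es ! i)"
    using ab b1 b2 i' il by (metis Suc_lessD n_not_Suc_n)
  have "es ! j \<noteq> es ! i" using gpd(1) j(1,2) i by (simp add: nth_eq_iff_index_eq)
  then have "es ! j = {(a - dx, b - dy), (a, b)}"
    using line_nb[of "es ! j" a b dx dy] gpd(2) j ei d hor by auto
  then show False using nin j(1) by (metis nth_mem)
qed

lemma clique_rep_edge:
  fixes V :: "'a set"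
  assumes fin: "finite V" and ne: "V \<noteq> {}" and rep: "helly_Bk_epg k V E P"
    and C: "maximal_clique V E C"
  shows "\<exists>v i. v \<in> V \<and> i \<in> EndIdx (P v) \<and> C = {w \<in> V. P v ! i \<in> set (P w)}"
proof -
  have epg: "epg_rep V E P" and hel: "helly_rep V P" using rep unfolding helly_Bk_epg_def by auto
  have gp: "\<And>v. v \<in> V \<Longrightarrow> grid_path (P v)" using epg unfolding epg_rep_def by blast
  have adj: "\<And>u v. u \<in> V \<Longrightarrow> v \<in> V \<Longrightarrow> u \<noteq> v \<Longrightarrow> E u v \<longleftrightarrow> set (P u) \<inter> set (P v) \<noteq> {}"
    using epg unfolding epg_rep_def by blast
  have Ccl: "clique V E C" and Cmax: "\<And>D. clique V E D \<Longrightarrow> C \<subseteq> D \<Longrightarrow> D = C"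
    using C unfolding maximal_clique_def by blast+
  have CV: "C \<subseteq> V" using Ccl unfolding clique_def by blast
  have Cadj: "\<And>u v. u \<in> C \<Longrightarrow> v \<in> C \<Longrightarrow> u \<noteq> v \<Longrightarrow> E u v" using Ccl unfolding clique_def by blast
  have Cne: "C \<noteq> {}"
  proof
    assume C0: "C = {}"
    obtain v where v: "v \<in> V" using ne by blast
    have "clique V E {v}" using v unfolding clique_def by blast
    then have "{v} = C" using Cmax C0 by blast
    then show False using C0 by blast
  qed
  have pw: "\<forall>u\<in>C. \<forall>v\<in>C. set (P u) \<inter> set (P v) \<noteq> {}"
  proof (intro ballI)
    fix u v assume uv: "u \<in> C" "v \<in> C"
    show "set (P u) \<inter> set (P v) \<noteq> {}"
    proof (cases "u = v")
      case True
      have "P u \<noteq> []" using gp[of u] uv CV unfolding grid_path_def by blast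
      then show ?thesis using True by simp
    next
      case False
      then show ?thesis using adj[of u v] Cadj[OF uv False] uv CV by blast
    qed
  qed
  have hel': "\<forall>S\<subseteq>V. (\<forall>u\<in>S. \<forall>v\<in>S. set (P u) \<inter> set (P v) \<noteq> {}) \<longrightarrow> (\<exists>e. \<forall>v\<in>S. e \<in> set (P v))"
    using hel unfolding helly_rep_def .
  have "\<exists>e. \<forall>v\<in>C. e \<in> set (P v)" using hel' CV pw by (metis (no_types, lifting))
  then obtain e where e: "\<And>v. v \<in> C \<Longrightarrow> e \<in> set (P v)" by blast
  obtain w0 where w0: "w0 \<in> C" using Cne by blast
  have "\<forall>e\<in>set (P w0). grid_edge e" using gp[of w0] w0 CV unfolding grid_path_def by blast
  then have "grid_edge e" using e[OF w0] by blast
  then obtain x0 y0 dx dy where d: "(dx = 1 \<and> dy = 0) \<or> (dx = 0 \<and> dy = (1::int))"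
    and eq: "e = {(x0, y0), (x0 + dx, y0 + dy)}"
    using grid_edge_norm by blast
  define l where "l t = (x0 + t * dx, y0 + t * dy)" for t :: int
  have linj: "\<And>a b. l a = l b \<Longrightarrow> a = b" using d unfolding l_def by auto
  define Ed where "Ed t = {l (- int t), l (- int t + 1)}" for t :: nat
  have Ed0: "Ed 0 = e" unfolding Ed_def l_def eq by simp
  have Edinj: "inj Ed"
  proof (rule injI)
    fix t t' assume h: "Ed t = Ed t'"
    have "l (- int t) \<in> Ed t'" using h unfolding Ed_def by blast
    then have a: "- int t = - int t' \<or> - int t = - int t' + 1" unfolding Ed_def using linj by blast
    have "l (- int t') \<in> Ed t" using h unfolding Ed_def by blast
    then have b: "- int t' = - int t \<or> - int t' = - int t + 1" unfolding Ed_def using linj by blast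
    show "t = t'" using a b by linarith
  qed
  define T where "T = {t. \<forall>s\<le>t. \<forall>v\<in>C. Ed s \<in> set (P v)}"
  have "T \<subseteq> Ed -` set (P w0)" unfolding T_def using w0 by blast
  moreover have "finite (Ed -` set (P w0))" using Edinj by (intro finite_vimageI) auto
  ultimately have Tfin: "finite T" by (rule finite_subset)
  have T0: "0 \<in> T" unfolding T_def using e Ed0 by simp
  define tm where "tm = Max T"
  have tmT: "tm \<in> T" unfolding tm_def using Tfin T0 by (intro Max_in) auto
  have "Suc tm \<notin> T" unfolding tm_def using Tfin Max_ge[OF Tfin, of "Suc tm"] by (metis Suc_n_not_le_n tm_def)
  then obtain s v0 where sv: "s \<le> Suc tm" "v0 \<in> C" "Ed s \<notin> set (P v0)" unfolding T_def by blast
  have "\<not> s \<le> tm" using tmT sv unfolding T_def by blast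
  then have sS: "s = Suc tm" using sv(1) by simp
  have all: "\<And>v. v \<in> C \<Longrightarrow> Ed tm \<in> set (P v)" using tmT unfolding T_def by blast
  obtain i where i: "i < length (P v0)" "P v0 ! i = Ed tm" using all[OF sv(2)] by (metis in_set_conv_nth)
  define t where "t = - int tm"
  have ei: "P v0 ! i = {(fst (l t), snd (l t)), (fst (l t) + dx, snd (l t) + dy)}"
    using i(2) unfolding Ed_def t_def l_def by (simp add: algebra_simps)
  have nin: "{(fst (l t) - dx, snd (l t) - dy), (fst (l t), snd (l t))} \<notin> set (P v0)"
  proof -
    have "Ed (Suc tm) = {(fst (l t) - dx, snd (l t) - dy), (fst (l t), snd (l t))}"
      unfolding Ed_def t_def l_def by (simp add: algebra_simps)
    then show ?thesis using sv(3) sS by simp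
  qed
  have v0V: "v0 \<in> V" using sv(2) CV by blast
  have iE: "i \<in> EndIdx (P v0)" by (rule ends_lemma[OF gp[OF v0V] i(1) d ei nin])
  define D where "D = {w \<in> V. P v0 ! i \<in> set (P w)}"
  have CD: "C \<subseteq> D"
  proof
    fix v assume "v \<in> C"
    then show "v \<in> D" unfolding D_def using CV all[of v] i(2) by auto
  qed
  have "clique V E D" unfolding clique_def
  proof (intro conjI ballI impI)
    show "D \<subseteq> V" unfolding D_def by blast
  next
    fix u v assume uv: "u \<in> D" "v \<in> D" "u \<noteq> v"
    then have "u \<in> V" "v \<in> V" "P v0 ! i \<in> set (P u) \<inter> set (P v)" unfolding D_def by auto
    then show "E u v" using adj[of u v] uv(3) by auto
  qed
  then have "D = C" using Cmax CD by simp
  then show ?thesis using v0V iE unfolding D_def by auto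
qed

lemma lower_count:
  fixes V :: "'a set"
  assumes fin: "finite V" and ne: "V \<noteq> {}" and rep: "helly_Bk_epg k V E P"
  shows "card {C. maximal_clique V E C} \<le> card V * (2 * k + 2)"
proof -
  define Sg where "Sg = Sigma V (\<lambda>v. EndIdx (P v))"
  define g where "g = (\<lambda>(v, i). {w \<in> V. P v ! i \<in> set (P w)})"
  have sub: "{C. maximal_clique V E C} \<subseteq> g ` Sg"
  proof
    fix C assume "C \<in> {C. maximal_clique V E C}"
    then obtain v i where "v \<in> V" "i \<in> EndIdx (P v)" "C = {w \<in> V. P v ! i \<in> set (P w)}"
      using clique_rep_edge[OF fin ne rep] by blast
    then show "C \<in> g ` Sg" unfolding Sg_def g_def by force
  qed
  have finS: "finite Sg" unfolding Sg_def using fin EndIdx_finite by blast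
  have "card {C. maximal_clique V E C} \<le> card (g ` Sg)" using sub finS by (intro card_mono) auto
  also have "\<dots> \<le> card Sg" using finS by (rule card_image_le)
  also have "card Sg = (\<Sum>v\<in>V. card (EndIdx (P v)))" unfolding Sg_def
    using fin by (intro card_SigmaI) (auto simp: EndIdx_finite)
  also have "\<dots> \<le> (\<Sum>v\<in>V. 2 * k + 2)"
  proof (rule sum_mono)
    fix v assume "v \<in> V"
    then have "bends (P v) \<le> k" using rep unfolding helly_Bk_epg_def by blast
    then show "card (EndIdx (P v)) \<le> 2 * k + 2" using EndIdx_card[of "P v"] by linarith
  qed
  also have "\<dots> = card V * (2 * k + 2)" by simp
  finally show ?thesis .
qed

theorem theorem3p1:
  fixes V :: "'a set" and E :: "'a \<Rightarrow> 'a \<Rightarrow> bool"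
  assumes "finite V"
    and "\<And>u v. E u v \<Longrightarrow> E v u"
    and "\<And>v. \<not> E v v"
  defines "n \<equiv> card V"
    and "\<mu> \<equiv> card {C. maximal_clique V E C}"
  shows "real \<mu> / (2 * real n) - 1 \<le> real (helly_bend V E)
       \<and> real (helly_bend V E) \<le> real \<mu> - 1"
proof -
  have up: "\<mu> \<ge> 1" "\<exists>P. helly_Bk_epg (\<mu> - 1) V E P"
    using upper_construction[of V E, OF assms(1) assms(2)] unfolding \<mu>_def by blast+
  have le: "helly_bend V E \<le> \<mu> - 1" unfolding helly_bend_def using up(2) by (rule Least_le)
  have ex: "\<exists>P. helly_Bk_epg (helly_bend V E) V E P" unfolding helly_bend_def using up(2) by (rule LeastI)
  then obtain P where P: "helly_Bk_epg (helly_bend V E) V E P" by blast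
  have u1: "real (helly_bend V E) \<le> real (\<mu> - 1)" using le by (simp only: of_nat_le_iff)
  have u2: "real (\<mu> - 1) = real \<mu> - 1" using up(1) by (simp add: of_nat_diff)
  have upper: "real (helly_bend V E) \<le> real \<mu> - 1" using u1 u2 by linarith
  have lower: "real \<mu> / (2 * real n) - 1 \<le> real (helly_bend V E)"
  proof (cases "V = {}")
    case True
    then have "n = 0" unfolding n_def by simp
    then show ?thesis by simp
  next
    case False
    then have npos: "real n > 0" unfolding n_def using assms(1) by (simp add: card_gt_0_iff)
    have "\<mu> \<le> n * (2 * helly_bend V E + 2)" unfolding \<mu>_def n_def
      by (rule lower_count[OF assms(1) False P])
    then have "real \<mu> \<le> real (n * (2 * helly_bend V E + 2))" by (simp only: of_nat_le_iff)
    then have "real \<mu> \<le> (real (helly_bend V E) + 1) * (2 * real n)" by (simp add: algebra_simps)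
    then have "real \<mu> / (2 * real n) \<le> real (helly_bend V E) + 1"
      using npos by (simp add: pos_divide_le_eq)
    then show ?thesis by linarith
  qed
  show ?thesis using upper lower by blast
qed

end
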